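(* Let $a\ge0$, $N\ge2$, and let $X_t$ be the continuous-time Markov chain on $\{0,1,\dots,N\}$ with transitions $j\to j+1$ at rate $a\,j(j-1)(N-j)/(N(N-1))$ and $j\to j-1$ at rate $j$, started from $X_0=N$. For $j=1,\dots,N$ let $\tau_j=\int_0^\infty P(X_t=j\mid X_0=N)\,dt$. Then $$\sum_{j=1}^N j\,\tau_j\le\sum_{j=1}^N\sum_{i=0}^j(a/4)^i.$$
   Context: The chain $X_t$ is the number of individuals in a single patch of the $N$-patch model when the outer birth rate is $b=0$. *)

theory Defs
  imports "HOL-Analysis.Analysis"
begin

definition up_rate :: "real \<Rightarrow> nat \<Rightarrow> nat \<Rightarrow> real" where
  "up_rate a N j = a * real j * (real j - 1) * (real N - real j) / (real N * (real N - 1))"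

definition down_rate :: "nat \<Rightarrow> real" where
  "down_rate j = real j"

definition gen :: "real \<Rightarrow> nat \<Rightarrow> nat \<Rightarrow> nat \<Rightarrow> real" where
  "gen a N i j =
     (if i \<le> N \<and> j \<le> N then
        (if j = i + 1 then up_rate a N i
         else if i = j + 1 then down_rate i
         else if i = j then - (up_rate a N i + down_rate i)
         else 0)
      else 0)"

fun gen_pow :: "real \<Rightarrow> nat \<Rightarrow> nat \<Rightarrow> nat \<Rightarrow> nat \<Rightarrow> real" where
  "gen_pow a N 0 i j = (if i = j then 1 else 0)"
| "gen_pow a N (Suc n) i j = (\<Sum>k\<in>{0..N}. gen_pow a N n i k * gen a N k j)"

text \<open>Transition function P(X_t = j | X_0 = i) = (exp (t Q))_{ij} of the finite-state CTMC.\<close>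
definition trans_prob :: "real \<Rightarrow> nat \<Rightarrow> real \<Rightarrow> nat \<Rightarrow> nat \<Rightarrow> real" where
  "trans_prob a N t i j = (\<Sum>n. t ^ n / fact n * gen_pow a N n i j)"

definition occ_time :: "real \<Rightarrow> nat \<Rightarrow> nat \<Rightarrow> real" where
  "occ_time a N j = (LBINT t:{0..}. trans_prob a N t N j)"

end

theory Submission
  imports Defs
begin


fun mp :: "(nat \<Rightarrow> nat \<Rightarrow> real) \<Rightarrow> nat \<Rightarrow> nat \<Rightarrow> nat \<Rightarrow> nat \<Rightarrow> real" where
  "mp A N 0 i j = (if i = j then 1 else 0)"
| "mp A N (Suc n) i j = (\<Sum>k\<in>{0..N}. mp A N n i k * A k j)"

lemma gen_pow_mp: "gen_pow a N n i j = mp (gen a N) N n i j"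
  by (induction n arbitrary: j) auto

lemma mp_nonneg: "(\<And>k l. 0 \<le> A k l) \<Longrightarrow> 0 \<le> mp A N n i j"
  by (induction n arbitrary: j) (auto intro!: sum_nonneg)

lemma mp_bound:
  assumes "\<And>k l. \<bar>A k l\<bar> \<le> C"
  shows "\<bar>mp A N n i j\<bar> \<le> (real (N+1) * C) ^ n"
proof (induction n arbitrary: j)
  case 0 then show ?case by auto
next
  case (Suc n)
  have C0: "0 \<le> C" using assms[of 0 0] by linarith
  have "\<bar>mp A N (Suc n) i j\<bar> \<le> (\<Sum>k\<in>{0..N}. \<bar>mp A N n i k * A k j\<bar>)"
    by (simp add: sum_abs)
  also have "\<dots> \<le> (\<Sum>k\<in>{0..N}. (real (N+1) * C) ^ n * C)"
    unfolding abs_mult by (intro sum_mono mult_mono Suc assms) (auto simp: C0)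
  also have "\<dots> = (real (N+1) * C) ^ Suc n" by simp
  finally show ?case .
qed

lemma mp_binom:
  fixes A :: "nat \<Rightarrow> nat \<Rightarrow> real"
  assumes "j \<le> N"
  shows "mp (\<lambda>k l. A k l + (if k = l then c else 0)) N n i j
        = (\<Sum>m\<le>n. real (n choose m) * c ^ (n - m) * mp A N m i j)"
  using assms
proof (induction n arbitrary: j)
  case 0 then show ?case by simp
next
  case (Suc n)
  let ?B = "\<lambda>k l. A k l + (if k = l then c else 0)"
  have "mp ?B N (Suc n) i j = (\<Sum>k\<in>{0..N}. (\<Sum>m\<le>n. real (n choose m) * c ^ (n - m) * mp A N m i k) * ?B k j)"
    using Suc by simp
  also have "\<dots> = (\<Sum>k\<in>{0..N}. (\<Sum>m\<le>n. real (n choose m) * c ^ (n - m) * mp A N m i k) * A k j)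
      + (\<Sum>k\<in>{0..N}. (if k = j then c * (\<Sum>m\<le>n. real (n choose m) * c ^ (n - m) * mp A N m i k) else 0))"
    by (subst sum.distrib[symmetric], rule sum.cong) (simp_all add: distrib_left)
  also have "\<dots> = (\<Sum>m\<le>n. real (n choose m) * c ^ (n - m) * mp A N (Suc m) i j)
      + (\<Sum>m\<le>n. real (n choose m) * c ^ (Suc n - m) * mp A N m i j)"
  proof -
    have 1: "(\<Sum>k\<in>{0..N}. (\<Sum>m\<le>n. real (n choose m) * c ^ (n - m) * mp A N m i k) * A k j)
       = (\<Sum>m\<le>n. real (n choose m) * c ^ (n - m) * mp A N (Suc m) i j)"
      by (simp only: sum_distrib_right mp.simps sum_distrib_left mult.assoc) (rule sum.swap)
    have 2: "(\<Sum>k\<in>{0..N}. (if k = j then c * (\<Sum>m\<le>n. real (n choose m) * c ^ (n - m) * mp A N m i k) else 0))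
       = (\<Sum>m\<le>n. real (n choose m) * c ^ (Suc n - m) * mp A N m i j)"
      using Suc.prems by (simp add: sum_distrib_left Suc_diff_le mult.assoc mult.left_commute)
    show ?thesis by (simp only: 1 2)
  qed
  also have "\<dots> = (\<Sum>m\<le>Suc n. real (Suc n choose m) * c ^ (Suc n - m) * mp A N m i j)"
  proof -
    let ?x = "\<lambda>m. mp A N m i j"
    have e1: "(\<Sum>m\<le>Suc n. real (Suc n choose m) * c ^ (Suc n - m) * ?x m)
       = c ^ Suc n * ?x 0 + (\<Sum>m\<le>n. real (Suc n choose Suc m) * c ^ (n - m) * ?x (Suc m))"
      by (subst sum.atMost_Suc_shift) (simp del: mp.simps)
    have e2: "(\<Sum>m\<le>n. real (Suc n choose Suc m) * c ^ (n - m) * ?x (Suc m))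
        = (\<Sum>m\<le>n. real (n choose m) * c ^ (n - m) * ?x (Suc m))
        + (\<Sum>m\<le>n. real (n choose Suc m) * c ^ (n - m) * ?x (Suc m))"
      by (simp del: mp.simps add: sum.distrib[symmetric] distrib_right)
    have e3: "c ^ Suc n * ?x 0 + (\<Sum>m\<le>n. real (n choose Suc m) * c ^ (n - m) * ?x (Suc m))
        = (\<Sum>m\<le>Suc n. real (n choose m) * c ^ (Suc n - m) * ?x m)"
      by (subst sum.atMost_Suc_shift) (simp del: mp.simps)
    have e4: "(\<Sum>m\<le>Suc n. real (n choose m) * c ^ (Suc n - m) * ?x m)
        = (\<Sum>m\<le>n. real (n choose m) * c ^ (Suc n - m) * ?x m)"
      by (simp del: mp.simps)
    show ?thesis using e1 e2 e3 e4 by linarith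
  qed
  finally show ?case .
qed



definition wr :: "real \<Rightarrow> nat \<Rightarrow> nat \<Rightarrow> real" where
  "wr a N i = a * (real i - 1) * (real N - real i) / (real N * (real N - 1))"

fun Ef :: "real \<Rightarrow> nat \<Rightarrow> nat \<Rightarrow> real" where
  "Ef a N 0 = 1"
| "Ef a N (Suc m) = 1 + wr a N (N - Suc m) * Ef a N m"

definition fv :: "real \<Rightarrow> nat \<Rightarrow> nat \<Rightarrow> real" where
  "fv a N l = (\<Sum>i=1..l. Ef a N (N - i))"

lemma up_rate_eq: "up_rate a N i = real i * wr a N i"
  unfolding up_rate_def wr_def by simp

lemma wr_nonneg:
  assumes "a \<ge> 0" "N \<ge> 2" "1 \<le> i" "i \<le> N"
  shows "0 \<le> wr a N i"
proof -
  have "real N * (real N - 1) > 0" using assms by simp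
  moreover have "0 \<le> a * (real i - 1) * (real N - real i)" using assms by simp
  ultimately show ?thesis unfolding wr_def by simp
qed

lemma wr_le:
  assumes "a \<ge> 0" "N \<ge> 2" "1 \<le> i" "i \<le> N"
  shows "wr a N i \<le> a / 4"
proof -
  have D: "real N * (real N - 1) > 0" using assms by simp
  have sq: "4 * (x * y) \<le> (x + y)^2" for x y :: real
  proof -
    have "(x+y)^2 - 4*(x*y) = (x-y)^2" by (simp add: power2_eq_square algebra_simps)
    thus ?thesis using zero_le_power2[of "x-y"] by linarith
  qed
  have "4 * ((real i - 1) * (real N - real i)) \<le> ((real i - 1) + (real N - real i))^2"
    by (rule sq)
  also have "\<dots> = (real N - 1)^2" by simp
  also have "\<dots> \<le> real N * (real N - 1)" using assms by (simp add: power2_eq_square)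
  finally have "4 * ((real i - 1) * (real N - real i)) \<le> real N * (real N - 1)" .
  hence "a * (4 * ((real i - 1) * (real N - real i))) \<le> a * (real N * (real N - 1))"
    using assms by (intro mult_left_mono) auto
  thus ?thesis unfolding wr_def using D by (simp add: field_simps)
qed

lemma Ef_ge1:
  assumes "a \<ge> 0" "N \<ge> 2"
  shows "m < N \<Longrightarrow> 1 \<le> Ef a N m"
proof (induction m)
  case 0 then show ?case by simp
next
  case (Suc m)
  have "0 \<le> wr a N (N - Suc m)" using Suc.prems assms by (intro wr_nonneg) auto
  with Suc show ?case by simp
qed

lemma Ef_le:
  assumes "a \<ge> 0" "N \<ge> 2"
  shows "m < N \<Longrightarrow> Ef a N m \<le> (\<Sum>i\<le>m. (a/4)^i)"
proof (induction m)
  case 0 then show ?case by simp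
next
  case (Suc m)
  have w0: "0 \<le> wr a N (N - Suc m)" using Suc.prems assms by (intro wr_nonneg) auto
  have w1: "wr a N (N - Suc m) \<le> a/4" using Suc.prems assms by (intro wr_le) auto
  have e1: "1 \<le> Ef a N m" using Suc.prems assms Ef_ge1 by auto
  have "Ef a N (Suc m) = 1 + wr a N (N - Suc m) * Ef a N m" by simp
  also have "\<dots> \<le> 1 + (a/4) * (\<Sum>i\<le>m. (a/4)^i)"
    using Suc w0 w1 e1 by (intro add_left_mono mult_mono) auto
  also have "\<dots> = (\<Sum>i\<le>Suc m. (a/4)^i)"
    by (simp add: sum_distrib_left sum.atMost_Suc_shift del: sum.atMost_Suc)
  finally show ?case .
qed

lemma fv_nonneg:
  assumes "a \<ge> 0" "N \<ge> 2"
  shows "0 \<le> fv a N l"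
  unfolding fv_def
proof (rule sum_nonneg)
  fix i assume "i \<in> {1..l}"
  hence "N - i < N" using assms by auto
  thus "0 \<le> Ef a N (N - i)" using Ef_ge1[OF assms] by (meson order.trans zero_le_one)
qed

lemma fv_bound:
  assumes "a \<ge> 0" "N \<ge> 2"
  shows "fv a N N \<le> (\<Sum>j=1..N. \<Sum>i=0..j. (a / 4) ^ i)"
proof -
  have "fv a N N \<le> (\<Sum>j=1..N. \<Sum>i=0..(N + 1 - j). (a / 4) ^ i)"
    unfolding fv_def
  proof (rule sum_mono)
    fix j assume j: "j \<in> {1..N}"
    have "Ef a N (N - j) \<le> (\<Sum>i\<le>N - j. (a/4)^i)" using j assms by (intro Ef_le) auto
    also have "\<dots> \<le> (\<Sum>i=0..(N + 1 - j). (a / 4) ^ i)"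
      using j assms by (intro sum_mono2) auto
    finally show "Ef a N (N - j) \<le> (\<Sum>i=0..(N + 1 - j). (a / 4) ^ i)" .
  qed
  also have "\<dots> = (\<Sum>j=1..N. \<Sum>i=0..j. (a / 4) ^ i)"
    by (subst sum.atLeastAtMost_rev) (simp add: add.commute)
  finally show ?thesis .
qed

lemma gen_expand:
  assumes "1 \<le> k" "k \<le> N" "l \<le> N"
  shows "gen a N k l = (if l = Suc k then up_rate a N k else 0) + (if l = k - 1 then real k else 0)
     + (if l = k then - (up_rate a N k + real k) else 0)"
  using assms unfolding gen_def down_rate_def by auto

lemma gen0: "gen a N 0 l = 0"
  unfolding gen_def up_rate_def down_rate_def by auto

lemma fv_step: "1 \<le> l \<Longrightarrow> fv a N l = fv a N (l - 1) + Ef a N (N - l)"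
  by (cases l) (auto simp: fv_def)

lemma Qf:
  assumes "a \<ge> 0" "N \<ge> 2" "1 \<le> k" "k \<le> N"
  shows "(\<Sum>l\<in>{0..N}. gen a N k l * fv a N l) = - real k"
proof -
  have "(\<Sum>l\<in>{0..N}. gen a N k l * fv a N l)
     = (\<Sum>l\<in>{0..N}. (if l = Suc k then up_rate a N k * fv a N l else 0)
       + (if l = k - 1 then real k * fv a N l else 0)
       + (if l = k then - (up_rate a N k + real k) * fv a N l else 0))"
    using assms by (intro sum.cong) (auto simp: gen_expand)
  also have "\<dots> = (if Suc k \<le> N then up_rate a N k * fv a N (Suc k) else 0)
       + real k * fv a N (k - 1) - (up_rate a N k + real k) * fv a N k"
    using assms by (auto simp: sum.distrib algebra_simps)
  also have "\<dots> = - real k"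
  proof (cases "k = N")
    case True
    have "up_rate a N N = 0" unfolding up_rate_def by simp
    moreover have "fv a N N = fv a N (N - 1) + Ef a N 0"
      using assms fv_step[of N a] by simp
    ultimately show ?thesis using True by (simp add: algebra_simps)
  next
    case False
    have f1: "fv a N (Suc k) = fv a N k + Ef a N (N - Suc k)" unfolding fv_def by simp
    have f2: "fv a N k = fv a N (k - 1) + Ef a N (N - k)"
      using assms fv_step[of k a N] by simp
    have nk: "N - k = Suc (N - Suc k)" using assms False by auto
    have "N - Suc (N - Suc k) = k" using assms False by auto
    hence f3: "Ef a N (N - k) = 1 + wr a N k * Ef a N (N - Suc k)" by (simp add: nk)
    show ?thesis using False assms f1 f2 f3 by (simp add: up_rate_eq algebra_simps)
  qed
  finally show ?thesis .
qed



lemma summ_exp_bound: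
  fixes g :: "nat \<Rightarrow> real"
  assumes "\<And>n. \<bar>g n\<bar> \<le> K ^ n / fact n"
  shows "summable (\<lambda>n. \<bar>g n * y ^ n\<bar>)" "summable (\<lambda>n. g n * y ^ n)"
proof -
  have b: "norm \<bar>g n * y ^ n\<bar> \<le> inverse (fact n) * (K * \<bar>y\<bar>) ^ n" for n
  proof -
    have "\<bar>g n * y ^ n\<bar> = \<bar>g n\<bar> * \<bar>y\<bar> ^ n" by (simp add: abs_mult power_abs)
    also have "\<dots> \<le> K ^ n / fact n * \<bar>y\<bar> ^ n" by (intro mult_right_mono assms) auto
    also have "\<dots> = inverse (fact n) * (K * \<bar>y\<bar>) ^ n" by (simp add: power_mult_distrib field_simps)
    finally show ?thesis by simp
  qed
  show s: "summable (\<lambda>n. \<bar>g n * y ^ n\<bar>)"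
    by (rule summable_comparison_test'[OF summable_exp b])
  show "summable (\<lambda>n. g n * y ^ n)"
    by (rule summable_rabs_cancel[OF s])
qed

locale chain =
  fixes a :: real and N :: nat
  assumes a: "a \<ge> 0" and N: "N \<ge> 2"
begin

abbreviation "Q \<equiv> gen a N"
definition "C0 = (\<Sum>k\<in>{0..N}. \<Sum>l\<in>{0..N}. \<bar>Q k l\<bar>) + 1"
definition "K = real (N+1) * C0"
abbreviation "r n j \<equiv> gen_pow a N n N j"
definition "cc j n = r n j / fact n"
definition "dd j n = (if n = 0 then 0 else r (n - 1) j / fact n)"
definition "F j T = (\<Sum>n. dd j n * T ^ n)"
abbreviation "p j t \<equiv> trans_prob a N t N j"

lemma Q_bound: "\<bar>Q k l\<bar> \<le> C0"
proof (cases "k \<le> N \<and> l \<le> N")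
  case True
  have "\<bar>Q k l\<bar> \<le> (\<Sum>l\<in>{0..N}. \<bar>Q k l\<bar>)" using True by (intro member_le_sum) auto
  also have "\<dots> \<le> (\<Sum>k\<in>{0..N}. \<Sum>l\<in>{0..N}. \<bar>Q k l\<bar>)"
    using True by (intro member_le_sum[where f="\<lambda>k. \<Sum>l\<in>{0..N}. \<bar>Q k l\<bar>"]) (auto intro: sum_nonneg)
  finally show ?thesis unfolding C0_def by simp
next
  case False
  hence "Q k l = 0" unfolding gen_def by auto
  moreover have "0 \<le> (\<Sum>k\<in>{0..N}. \<Sum>l\<in>{0..N}. \<bar>Q k l\<bar>)" by (intro sum_nonneg) auto
  ultimately show ?thesis unfolding C0_def by simp
qed

lemma C0_ge1: "C0 \<ge> 1"
  unfolding C0_def by (simp add: sum_nonneg)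

lemma K_ge1: "K \<ge> 1"
proof -
  have "0 \<le> real N * C0" using C0_ge1 by simp
  moreover have "K = C0 + real N * C0" by (simp add: K_def distrib_right)
  ultimately show ?thesis using C0_ge1 by linarith
qed

lemma r_bound: "\<bar>r n j\<bar> \<le> K ^ n"
  unfolding gen_pow_mp K_def by (rule mp_bound) (rule Q_bound)

lemma cc_bound: "\<bar>cc j n\<bar> \<le> K ^ n / fact n"
  unfolding cc_def using r_bound by (simp add: divide_right_mono)

lemma dd_bound: "\<bar>dd j n\<bar> \<le> K ^ n / fact n"
proof (cases n)
  case 0 then show ?thesis by (simp add: dd_def)
next
  case (Suc m)
  have "K ^ m \<le> K ^ Suc m" by (rule power_increasing) (use K_ge1 in auto)
  hence "\<bar>r m j\<bar> \<le> K ^ Suc m" using r_bound[of m j] by linarith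
  then show ?thesis using Suc by (simp add: dd_def divide_right_mono)
qed

lemma p_eq: "p j t = (\<Sum>n. cc j n * t ^ n)"
  unfolding trans_prob_def cc_def by (simp add: field_simps)

lemma diffs_dd: "diffs (dd j) = cc j"
proof (rule ext)
  fix n
  have "fact (Suc n) = real (Suc n) * (fact n :: real)" by (simp add: fact_Suc)
  moreover have "real (Suc n) \<noteq> 0" "(fact n :: real) \<noteq> 0" by auto
  ultimately show "diffs (dd j) n = cc j n"
    unfolding diffs_def dd_def cc_def by (simp del: of_nat_Suc fact_Suc)
qed

lemma F_deriv: "(F j has_field_derivative p j t) (at t)"
proof -
  have eq: "F j = (\<lambda>T. \<Sum>n. dd j n * T ^ n)" by (rule ext) (simp add: F_def)
  show ?thesis unfolding eq p_eq diffs_dd[symmetric]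
  by (rule termdiffs_strong_converges_everywhere) (rule summ_exp_bound(2)[OF dd_bound])
qed

lemma p_cont: "isCont (p j) t"
  unfolding p_eq by (rule isCont_powser_converges_everywhere) (rule summ_exp_bound(2)[OF cc_bound])

lemma F0: "F j 0 = 0"
proof -
  have "(\<lambda>n. dd j n * 0 ^ n) = (\<lambda>n. 0)" by (auto simp: dd_def)
  thus ?thesis unfolding F_def by simp
qed

lemma p_integral: "T \<ge> 0 \<Longrightarrow> (p j has_integral F j T) {0..T}"
  using fundamental_theorem_of_calculus[of 0 T "F j" "p j"] F_deriv F0
  by (simp add: has_real_derivative_iff_has_vector_derivative[symmetric] has_field_derivative_at_within)

lemma F_Q:
  assumes "j \<le> N"
  shows "(\<Sum>k\<in>{0..N}. F k T * Q k j) = p j T - (if N = j then 1 else 0)"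
proof -
  have sdd: "summable (\<lambda>n. dd k n * T ^ n)" for k by (rule summ_exp_bound(2)[OF dd_bound])
  have "(\<Sum>k\<in>{0..N}. F k T * Q k j) = (\<Sum>k\<in>{0..N}. \<Sum>n. dd k n * T ^ n * Q k j)"
    unfolding F_def by (intro sum.cong refl suminf_mult2 sdd)
  also have "\<dots> = (\<Sum>n. \<Sum>k\<in>{0..N}. dd k n * T ^ n * Q k j)"
    by (rule suminf_sum[symmetric]) (intro summable_mult2 sdd)
  also have "\<dots> = (\<Sum>n. if n = 0 then 0 else cc j n * T ^ n)"
  proof (rule suminf_cong)
    fix n show "(\<Sum>k\<in>{0..N}. dd k n * T ^ n * Q k j) = (if n = 0 then 0 else cc j n * T ^ n)"
    proof (cases n)
      case 0 thus ?thesis by (simp add: dd_def)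
    next
      case (Suc m)
      have "(\<Sum>k\<in>{0..N}. dd k n * T ^ n * Q k j) = (\<Sum>k\<in>{0..N}. T ^ n / fact n * (r m k * Q k j))"
        by (intro sum.cong refl) (simp add: Suc dd_def)
      also have "\<dots> = T ^ n / fact n * (\<Sum>k\<in>{0..N}. r m k * Q k j)"
        by (rule sum_distrib_left[symmetric])
      also have "\<dots> = T ^ n / fact n * r n j"
        by (simp add: Suc del: fact_Suc)
      also have "\<dots> = cc j n * T ^ n" by (simp add: cc_def)
      finally show ?thesis using Suc by simp
    qed
  qed
  also have "\<dots> = p j T - cc j 0"
  proof -
    have s: "(\<lambda>n. cc j n * T ^ n) sums p j T"
      unfolding p_eq by (rule summable_sums) (rule summ_exp_bound(2)[OF cc_bound])
    have "(\<lambda>n. cc j n * T ^ n - (if n = 0 then cc j 0 else 0)) sums (p j T - cc j 0)"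
      by (rule sums_diff[OF s sums_single])
    moreover have "(\<lambda>n. cc j n * T ^ n - (if n = 0 then cc j 0 else 0)) = (\<lambda>n. if n = 0 then 0 else cc j n * T ^ n)"
      by auto
    ultimately show ?thesis by (simp add: sums_iff)
  qed
  also have "cc j 0 = (if N = j then 1 else 0)" by (simp add: cc_def)
  finally show ?thesis .
qed

lemma identity:
  "(\<Sum>k=1..N. real k * F k T) = fv a N N - (\<Sum>j\<in>{0..N}. p j T * fv a N j)"
proof -
  have "(\<Sum>k\<in>{0..N}. F k T * (\<Sum>j\<in>{0..N}. Q k j * fv a N j))
      = (\<Sum>j\<in>{0..N}. (\<Sum>k\<in>{0..N}. F k T * Q k j) * fv a N j)"
    by (simp add: sum_distrib_left sum_distrib_right mult.assoc) (rule sum.swap)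
  also have "\<dots> = (\<Sum>j\<in>{0..N}. (p j T - (if N = j then 1 else 0)) * fv a N j)"
    by (intro sum.cong refl) (simp add: F_Q)
  also have "\<dots> = (\<Sum>j\<in>{0..N}. p j T * fv a N j - (if N = j then fv a N j else 0))"
    by (intro sum.cong refl) (auto simp: left_diff_distrib)
  also have "\<dots> = (\<Sum>j\<in>{0..N}. p j T * fv a N j) - fv a N N"
    by (simp add: sum_subtractf sum.delta)
  finally have e1: "(\<Sum>k\<in>{0..N}. F k T * (\<Sum>j\<in>{0..N}. Q k j * fv a N j)) = (\<Sum>j\<in>{0..N}. p j T * fv a N j) - fv a N N" .
  have "(\<Sum>k\<in>{0..N}. F k T * (\<Sum>j\<in>{0..N}. Q k j * fv a N j))
      = F 0 T * (\<Sum>j\<in>{0..N}. Q 0 j * fv a N j) + (\<Sum>k=1..N. F k T * (\<Sum>j\<in>{0..N}. Q k j * fv a N j))"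
    by (simp add: sum.atLeast_Suc_atMost)
  also have "\<dots> = (\<Sum>k=1..N. F k T * (- real k))"
    using a N by (simp add: gen0 Qf)
  finally show ?thesis using e1 by (simp add: sum_negf mult.commute)
qed

lemma up_rate_nonneg: "k \<le> N \<Longrightarrow> 0 \<le> up_rate a N k"
  unfolding up_rate_def using a N
  by (cases k) (auto intro!: divide_nonneg_pos mult_nonneg_nonneg)

lemma gen_offdiag: "k \<noteq> l \<Longrightarrow> 0 \<le> Q k l"
  unfolding gen_def down_rate_def using up_rate_nonneg by auto

lemma M_nonneg: "0 \<le> Q k l + (if k = l then C0 else 0)"
  using gen_offdiag[of k l] Q_bound[of k l] by auto

lemma M_bound: "\<bar>Q k l + (if k = l then C0 else 0)\<bar> \<le> 2 * C0"
  using Q_bound[of k l] C0_ge1 by auto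

lemma p_nonneg:
  assumes t: "t \<ge> 0" and j: "j \<le> N"
  shows "0 \<le> p j t"
proof -
  define A where "A = (\<lambda>n. t ^ n / fact n * r n j)"
  define B where "B = (\<lambda>n::nat. (t * C0) ^ n / fact n)"
  define K2 where "K2 = real (N+1) * (2 * C0)"
  have A_eq: "A n = cc j n * t ^ n" for n by (simp add: A_def cc_def)
  have sa: "summable (\<lambda>n. norm (A n))"
    unfolding A_eq real_norm_def by (rule summ_exp_bound(1)[OF cc_bound])
  have B_eq: "B n = inverse (fact n) * (t * C0) ^ n" for n by (simp add: B_def divide_inverse mult.commute)
  have sb: "summable (\<lambda>n. norm (B n))"
  proof -
    have "norm (B n) = B n" for n using t C0_ge1 by (simp add: B_def)
    thus ?thesis unfolding B_eq using summable_exp[of "t * C0"] by (simp add: B_eq)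
  qed
  have eb: "(\<Sum>n. B n) = exp (t * C0)"
    using exp_converges[of "t * C0", THEN sums_unique] by (simp add: B_def divide_inverse mult.commute)
  have ea: "(\<Sum>n. A n) = p j t" by (simp add: A_def trans_prob_def)
  have "p j t * exp (t * C0) = (\<Sum>n. \<Sum>i\<le>n. A i * B (n - i))"
    using Cauchy_product[OF sa sb] ea eb by simp
  also have "\<dots> = (\<Sum>n. t ^ n / fact n * mp (\<lambda>k l. Q k l + (if k = l then C0 else 0)) N n N j)"
  proof (rule suminf_cong)
    fix n
    have "(\<Sum>i\<le>n. A i * B (n - i)) = (\<Sum>i\<le>n. t ^ n / fact n * (real (n choose i) * C0 ^ (n - i) * r i j))"
    proof (intro sum.cong refl)
      fix i assume "i \<in> {..n}"
      hence i: "i \<le> n" by simp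
      have tn: "t ^ n = t ^ i * t ^ (n - i)" using i by (simp flip: power_add)
      show "A i * B (n - i) = t ^ n / fact n * (real (n choose i) * C0 ^ (n - i) * r i j)"
        unfolding A_def B_def tn binomial_fact[OF i] by (simp add: power_mult_distrib field_simps)
    qed
    also have "\<dots> = t ^ n / fact n * mp (\<lambda>k l. Q k l + (if k = l then C0 else 0)) N n N j"
      by (simp add: mp_binom[OF j] gen_pow_mp sum_distrib_left)
    finally show "(\<Sum>i\<le>n. A i * B (n - i)) = t ^ n / fact n * mp (\<lambda>k l. Q k l + (if k = l then C0 else 0)) N n N j" .
  qed
  also have "\<dots> \<ge> 0"
  proof (rule suminf_nonneg)
    have "\<bar>mp (\<lambda>k l. Q k l + (if k = l then C0 else 0)) N n N j / fact n\<bar> \<le> K2 ^ n / fact n" for n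
    proof -
      have "\<bar>mp (\<lambda>k l. Q k l + (if k = l then C0 else 0)) N n N j\<bar> \<le> K2 ^ n"
        unfolding K2_def by (rule mp_bound[OF M_bound])
      thus ?thesis by (simp add: divide_right_mono)
    qed
    from summ_exp_bound(2)[OF this, of t]
    show "summable (\<lambda>n. t ^ n / fact n * mp (\<lambda>k l. Q k l + (if k = l then C0 else 0)) N n N j)"
      by (simp add: field_simps)
    show "0 \<le> t ^ n / fact n * mp (\<lambda>k l. Q k l + (if k = l then C0 else 0)) N n N j" for n
      using t by (intro mult_nonneg_nonneg divide_nonneg_pos mp_nonneg M_nonneg) auto
  qed
  finally have "0 \<le> p j t * exp (t * C0)" .
  thus ?thesis by (simp add: zero_le_mult_iff)
qed

lemma h_integral: "T \<ge> 0 \<Longrightarrow> ((\<lambda>t. \<Sum>k=1..N. real k * p k t) has_integral (\<Sum>k=1..N. real k * F k T)) {0..T}"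
  by (intro has_integral_sum has_integral_mult_right p_integral) auto

lemma hF_le: "T \<ge> 0 \<Longrightarrow> (\<Sum>k=1..N. real k * F k T) \<le> fv a N N"
proof -
  assume T: "T \<ge> 0"
  have "0 \<le> (\<Sum>j\<in>{0..N}. p j T * fv a N j)"
    using T a N by (intro sum_nonneg mult_nonneg_nonneg p_nonneg fv_nonneg) auto
  thus ?thesis using identity[of T] by linarith
qed

lemma p_meas[measurable]: "p k \<in> borel_measurable borel"
  by (intro borel_measurable_continuous_onI continuous_at_imp_continuous_on ballI p_cont)

lemma main: "(\<Sum>j=1..N. real j * occ_time a N j) \<le> fv a N N"
proof -
  define h where "h t = (\<Sum>k=1..N. real k * p k t)" for t
  have h_meas[measurable]: "h \<in> borel_measurable borel" unfolding h_def by measurable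
  have h_nonneg: "t \<ge> 0 \<Longrightarrow> 0 \<le> h t" for t
    unfolding h_def by (intro sum_nonneg mult_nonneg_nonneg p_nonneg) auto
  define G where "G k = (\<integral>\<^sup>+t. ennreal (indicator {0..} t * p k t) \<partial>lborel)" for k
  have occ: "occ_time a N k = enn2real (G k)" if "k \<le> N" for k
    unfolding occ_time_def set_lebesgue_integral_def G_def
    using that by (subst integral_eq_nn_integral) (auto simp: p_nonneg split: split_indicator)
  have sumG: "(\<Sum>k=1..N. ennreal (real k) * G k) = (\<integral>\<^sup>+t. ennreal (indicator {0..} t * h t) \<partial>lborel)"
  proof -
    have "(\<Sum>k=1..N. ennreal (real k) * G k) = (\<Sum>k=1..N. \<integral>\<^sup>+t. ennreal (real k) * ennreal (indicator {0..} t * p k t) \<partial>lborel)"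
      unfolding G_def by (intro sum.cong refl nn_integral_cmult[symmetric]) measurable
    also have "\<dots> = (\<integral>\<^sup>+t. (\<Sum>k=1..N. ennreal (real k) * ennreal (indicator {0..} t * p k t)) \<partial>lborel)"
      by (rule nn_integral_sum[symmetric]) measurable
    also have "\<dots> = (\<integral>\<^sup>+t. ennreal (indicator {0..} t * h t) \<partial>lborel)"
    proof (rule nn_integral_cong)
      fix t :: real
      show "(\<Sum>k=1..N. ennreal (real k) * ennreal (indicator {0..} t * p k t)) = ennreal (indicator {0..} t * h t)"
      proof (cases "t \<ge> 0")
        case True
        have "(\<Sum>k=1..N. ennreal (real k) * ennreal (indicator {0..} t * p k t)) = (\<Sum>k=1..N. ennreal (real k * p k t))"
          using True by (intro sum.cong refl) (auto simp: ennreal_mult p_nonneg)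
        also have "\<dots> = ennreal (h t)" unfolding h_def
          using True by (intro sum_ennreal) (auto intro!: mult_nonneg_nonneg p_nonneg)
        finally show ?thesis using True by simp
      qed simp
    qed
    finally show ?thesis .
  qed
  have bound: "(\<integral>\<^sup>+t. ennreal (indicator {0..} t * h t) \<partial>lborel) \<le> ennreal (fv a N N)"
  proof -
    define f where "f n t = ennreal (indicator {0..real n} t * h t)" for n :: nat and t
    have f_meas[measurable]: "f n \<in> borel_measurable lborel" for n unfolding f_def by measurable
    have inc: "incseq f"
      by (intro monoI le_funI) (auto simp: f_def h_nonneg split: split_indicator)
    have sup: "(\<lambda>t. SUP n. f n t) = (\<lambda>t. ennreal (indicator {0..} t * h t))"
    proof (rule ext)
      fix t :: real
      show "(SUP n. f n t) = ennreal (indicator {0..} t * h t)"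
      proof (cases "t \<ge> 0")
        case True
        obtain n :: nat where n: "t \<le> real n" using real_arch_simple by blast
        have "f n t = ennreal (h t)" using True n by (simp add: f_def)
        moreover have "f m t \<le> ennreal (h t)" for m using True h_nonneg
          by (auto simp: f_def split: split_indicator)
        ultimately have "(SUP n. f n t) = ennreal (h t)"
          by (intro antisym SUP_least) (auto intro: SUP_upper2[where i=n])
        thus ?thesis using True by simp
      qed (simp add: f_def)
    qed
    have "(\<integral>\<^sup>+t. ennreal (indicator {0..} t * h t) \<partial>lborel) = (SUP n. integral\<^sup>N lborel (f n))"
      using nn_integral_monotone_convergence_SUP[OF inc f_meas] sup by simp
    also have "\<dots> \<le> ennreal (fv a N N)"
    proof (rule SUP_least)
      fix n :: nat
      have "integral\<^sup>N lborel (f n) = ennreal (\<Sum>k=1..N. real k * F k (real n))"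
        unfolding f_def
      proof (rule nn_integral_has_integral_lebesgue)
        show "\<And>x. x \<in> {0..real n} \<Longrightarrow> 0 \<le> h x" using h_nonneg by auto
        show "(h has_integral (\<Sum>k=1..N. real k * F k (real n))) {0..real n}"
          unfolding h_def[abs_def] by (rule h_integral) simp
      qed
      also have "\<dots> \<le> ennreal (fv a N N)" by (intro ennreal_leI hF_le) auto
      finally show "integral\<^sup>N lborel (f n) \<le> ennreal (fv a N N)" .
    qed
    finally show ?thesis .
  qed
  have Gfin: "G k < top" if "k \<in> {1..N}" for k
  proof -
    have "G k \<le> ennreal (real k) * G k"
    proof -
      have "1 * G k \<le> ennreal (real k) * G k" using that by (intro mult_right_mono) auto
      thus ?thesis by simp
    qed
    also have "\<dots> \<le> (\<Sum>k=1..N. ennreal (real k) * G k)"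
      using that by (intro member_le_sum) auto
    also have "\<dots> \<le> ennreal (fv a N N)" using sumG bound by simp
    finally show ?thesis using ennreal_less_top le_less_trans by blast
  qed
  have "(\<Sum>j=1..N. real j * occ_time a N j) = (\<Sum>j=1..N. enn2real (ennreal (real j) * G j))"
    by (intro sum.cong refl) (auto simp: occ enn2real_mult)
  also have "\<dots> = enn2real (\<Sum>j=1..N. ennreal (real j) * G j)"
    by (rule enn2real_sum[symmetric, simplified comp_def]) (auto simp: ennreal_mult_less_top Gfin)
  also have "\<dots> \<le> fv a N N"
    using sumG bound fv_nonneg[OF a N, of N] by (intro enn2real_leI) auto
  finally show ?thesis .
qed

end

theorem lemma11p1:
  fixes a :: real and N :: nat
  assumes "a \<ge> 0" and "N \<ge> 2"
  shows "(\<Sum>j=1..N. real j * occ_time a N j) \<le> (\<Sum>j=1..N. \<Sum>i=0..j. (a / 4) ^ i)"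
proof -
  interpret chain a N using assms by unfold_locales
  show ?thesis using main fv_bound[OF assms] by linarith
qed

end
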